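(* For every $p\in\mathbb R^m$, $$H^+(p):=\min_{Q}\max_{w\in\Delta_K}\sum_{i=1}^m\sum_{a}w(a)D(Q_a\|\nu^i_a)p_i\;=\;H^-(p):=\max_{w\in\Delta_K}\min_{Q}\sum_{i=1}^m\sum_{a}w(a)D(Q_a\|\nu^i_a)p_i,$$ ($Q$ ranging over $(\Delta_{\mathcal X})^K$), and this common value $H(p)$ equals $$H(p)=\begin{cases}\max_{a\in[K]}-\big(\sum_i p_i\big)\log\Big(\sum_{x\in\mathcal X}\prod_{i=1}^m\nu^i_a(x)^{p_i/\sum_k p_k}\Big),&\text{if }\sum_ip_i>0,\\[2pt] \max_{a\in[K]}\min_{x\in\mathcal X}-\sum_ip_i\log\nu^i_a(x),&\text{if }\sum_ip_i\le0.\end{cases}$$ Moreover $H$ is Lipschitz continuous on $\mathbb R^m$ with Lipschitz constant $\sqrt m\log(1/\epsilon)$, and $H$ is non-decreasing in each coordinate $p_i$.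
   Context: $\mathcal X$ is a finite set, $\Delta_{\mathcal X}$ the probability distributions on $\mathcal X$, $\Delta_K$ the simplex on $[K]$, $D$ the KL divergence. Fix $m\ge2$ bandits $\nu^1,\dots,\nu^m$, $\nu^i=(\nu^i_a)_{a\in[K]}$, with $\nu^i_a\in\Delta_{\mathcal X}$ and $\nu^i_a(x)\ge\epsilon$ for all $i,a,x$, for some $\epsilon\in(0,1)$. *)

theory Defs
  imports "HOL-Analysis.Analysis"
begin

definition prob_simplex :: "('b::finite \<Rightarrow> real) set" where
  "prob_simplex = {q. (\<forall>x. 0 \<le> q x) \<and> sum q UNIV = 1}"

definition KL :: "('x::finite \<Rightarrow> real) \<Rightarrow> ('x \<Rightarrow> real) \<Rightarrow> real" where
  "KL Q P = (\<Sum>x\<in>UNIV. if Q x = 0 then 0 else Q x * ln (Q x / P x))"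

definition objective ::
  "('m::finite \<Rightarrow> 'a::finite \<Rightarrow> 'x::finite \<Rightarrow> real) \<Rightarrow> real^'m \<Rightarrow> ('a \<Rightarrow> 'x \<Rightarrow> real) \<Rightarrow> ('a \<Rightarrow> real) \<Rightarrow> real" where
  "objective nu p Q w = (\<Sum>i\<in>UNIV. \<Sum>a\<in>UNIV. w a * KL (Q a) (nu i a) * p $ i)"

definition Hplus ::
  "('m::finite \<Rightarrow> 'a::finite \<Rightarrow> 'x::finite \<Rightarrow> real) \<Rightarrow> real^'m \<Rightarrow> real" where
  "Hplus nu p = (INF Q\<in>{Q. \<forall>a. Q a \<in> prob_simplex}. SUP w\<in>prob_simplex. objective nu p Q w)"

definition Hminus ::
  "('m::finite \<Rightarrow> 'a::finite \<Rightarrow> 'x::finite \<Rightarrow> real) \<Rightarrow> real^'m \<Rightarrow> real" where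
  "Hminus nu p = (SUP w\<in>prob_simplex. INF Q\<in>{Q. \<forall>a. Q a \<in> prob_simplex}. objective nu p Q w)"

end

theory Submission
  imports Defs
begin

definition negent :: "('x::finite \<Rightarrow> real) \<Rightarrow> real" where
  "negent q = (\<Sum>x\<in>UNIV. if q x = 0 then 0 else q x * ln (q x))"

lemma simplex_le1:
  assumes "q \<in> prob_simplex" shows "q x \<le> 1" "0 \<le> q x"
proof -
  have "q x \<le> sum q UNIV" using assms unfolding prob_simplex_def
    by (intro member_le_sum) auto
  thus "q x \<le> 1" using assms unfolding prob_simplex_def by simp
  show "0 \<le> q x" using assms unfolding prob_simplex_def by simp
qed

lemma KL_split':
  assumes "\<forall>x. P x > 0" and "q \<in> prob_simplex"
  shows "KL q P = negent q - (\<Sum>x\<in>UNIV. q x * ln (P x))"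
proof -
  have "\<forall>x. 0 \<le> q x" using assms(2) unfolding prob_simplex_def by simp
  have "KL q P = (\<Sum>x\<in>UNIV. (if q x = 0 then 0 else q x * ln (q x)) - q x * ln (P x))"
    unfolding KL_def
  proof (rule sum.cong)
    fix x assume "x \<in> (UNIV :: 'a set)"
    show "(if q x = 0 then 0 else q x * ln (q x / P x)) = (if q x = 0 then 0 else q x * ln (q x)) - q x * ln (P x)"
      using \<open>\<forall>x. 0 \<le> q x\<close> assms(1)
      by (cases "q x = 0") (auto simp: ln_div algebra_simps less_le)
  qed simp
  thus ?thesis unfolding negent_def by (simp add: sum_subtractf)
qed

lemma negent_le0:
  assumes "q \<in> prob_simplex" shows "negent q \<le> 0"
  unfolding negent_def
proof (rule sum_nonpos)
  fix x
  have a: "0 \<le> q x" "q x \<le> 1" using simplex_le1[OF assms] by auto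
  show "(if q x = 0 then 0 else q x * ln (q x)) \<le> 0"
  proof (cases "q x = 0")
    case False
    hence "0 < q x" using a by simp
    hence "ln (q x) \<le> 0" using a by simp
    thus ?thesis using a by (simp add: mult_nonneg_nonpos)
  qed simp
qed

lemma gibbs:
  assumes q: "q \<in> prob_simplex" and r: "r \<in> prob_simplex" and rp: "\<forall>x. r x > 0"
  shows "0 \<le> KL q r"
proof -
  have "(\<Sum>x\<in>UNIV. q x - r x) \<le> KL q r"
    unfolding KL_def
  proof (rule sum_mono)
    fix x
    have a: "0 \<le> q x" using simplex_le1[OF q] by auto
    show "q x - r x \<le> (if q x = 0 then 0 else q x * ln (q x / r x))"
    proof (cases "q x = 0")
      case True thus ?thesis using rp by (simp add: less_imp_le)
    next
      case False
      hence qp: "0 < q x" using a by simp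
      have "ln (r x / q x) \<le> r x / q x - 1" using qp rp by (intro ln_le_minus_one) simp
      moreover have "ln (q x / r x) = - ln (r x / q x)" using qp rp by (simp add: ln_div)
      ultimately have "q x * (1 - r x / q x) \<le> q x * ln (q x / r x)"
        using qp by (intro mult_left_mono) auto
      moreover have "q x * (1 - r x / q x) = q x - r x" using qp by (simp add: field_simps)
      ultimately show ?thesis using False by simp
    qed
  qed
  moreover have "(\<Sum>x\<in>UNIV. q x - r x) = 0" using q r unfolding prob_simplex_def
    by (simp add: sum_subtractf)
  ultimately show ?thesis by simp
qed

lemma KL_self: assumes "\<forall>x. r x > 0" shows "KL r r = 0"
  unfolding KL_def using assms by (intro sum.neutral) (auto simp: less_imp_neq[symmetric] dest: spec[of _ x for x])


definition fa :: "('m::finite \<Rightarrow> 'a::finite \<Rightarrow> 'x::finite \<Rightarrow> real) \<Rightarrow> real^'m \<Rightarrow> 'a \<Rightarrow> ('x \<Rightarrow> real) \<Rightarrow> real" where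
  "fa nu p a q = (\<Sum>i\<in>UNIV. p $ i * KL q (nu i a))"

definition cst :: "('m::finite \<Rightarrow> 'a::finite \<Rightarrow> 'x::finite \<Rightarrow> real) \<Rightarrow> real^'m \<Rightarrow> 'a \<Rightarrow> 'x \<Rightarrow> real" where
  "cst nu p a = (\<lambda>x. - (\<Sum>i\<in>UNIV. p $ i * ln (nu i a x)))"

definition mval :: "('m::finite \<Rightarrow> 'a::finite \<Rightarrow> 'x::finite \<Rightarrow> real) \<Rightarrow> real^'m \<Rightarrow> 'a \<Rightarrow> real" where
  "mval nu p a = (if (\<Sum>i\<in>UNIV. p $ i) > 0
               then - (\<Sum>i\<in>UNIV. p $ i) *
                      ln (\<Sum>x\<in>UNIV. \<Prod>i\<in>UNIV. nu i a x powr (p $ i / (\<Sum>k\<in>UNIV. p $ k)))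
               else Min (range (\<lambda>x. - (\<Sum>i\<in>UNIV. p $ i * ln (nu i a x)))))"

lemma objective_eq: "objective nu p Q w = (\<Sum>a\<in>UNIV. w a * fa nu p a (Q a))"
  unfolding objective_def fa_def
  by (subst sum.swap) (simp add: sum_distrib_left mult_ac)

lemma fa_expand:
  assumes pos: "\<forall>i a x. nu i a x > 0" and q: "q \<in> prob_simplex"
  shows "fa nu p a q = (\<Sum>i\<in>UNIV. p $ i) * negent q + (\<Sum>x\<in>UNIV. q x * cst nu p a x)"
proof -
  have "fa nu p a q = (\<Sum>i\<in>UNIV. p $ i * (negent q - (\<Sum>x\<in>UNIV. q x * ln (nu i a x))))"
    unfolding fa_def using KL_split'[OF _ q] pos by simp
  also have "\<dots> = (\<Sum>i\<in>UNIV. p $ i) * negent q - (\<Sum>i\<in>UNIV. \<Sum>x\<in>UNIV. q x * (p $ i * ln (nu i a x)))"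
    by (simp add: right_diff_distrib sum_subtractf sum_distrib_left sum_distrib_right mult_ac)
  also have "(\<Sum>i\<in>UNIV. \<Sum>x\<in>UNIV. q x * (p $ i * ln (nu i a x))) = (\<Sum>x\<in>UNIV. q x * (\<Sum>i\<in>UNIV. p $ i * ln (nu i a x)))"
    by (subst sum.swap) (simp add: sum_distrib_left)
  finally show ?thesis unfolding cst_def by (simp add: sum_negf)
qed

lemma delta_simplex: "(\<lambda>b. if b = a0 then 1 else 0 :: real) \<in> prob_simplex"
  unfolding prob_simplex_def by simp

lemma delta_sum: fixes F :: "'b::finite \<Rightarrow> real" shows "(\<Sum>b\<in>UNIV. (if b = a0 then 1 else 0) * F b) = (F a0 :: real)"
proof -
  have "(\<Sum>b\<in>UNIV. (if b = a0 then 1 else 0) * F b) = (\<Sum>b\<in>UNIV. if b = a0 then F b else 0)"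
    by (intro sum.cong) auto
  thus ?thesis by (simp add: sum.delta)
qed

lemma mval_min:
  assumes pos: "\<forall>i a x. nu i a x > 0"
  shows "(\<exists>q\<in>prob_simplex. fa nu p a q = mval nu p a) \<and> (\<forall>q\<in>prob_simplex. mval nu p a \<le> fa nu p a q)"
proof (cases "(\<Sum>i\<in>UNIV. p $ i) > 0")
  case True
  define s where "s = (\<Sum>i\<in>UNIV. p $ i)"
  have sp: "s > 0" using True s_def by simp
  have nz: "nu i a' x \<noteq> 0" for i a' x using pos by (metis less_irrefl)
  define g where "g x = (\<Prod>i\<in>UNIV. nu i a x powr (p $ i / s))" for x
  have gp: "g x > 0" for x unfolding g_def by (intro prod_pos) (metis pos order_less_irrefl powr_gt_zero)
  have lng: "ln (g x) = - cst nu p a x / s" for x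
  proof -
    have "ln (g x) = (\<Sum>i\<in>UNIV. ln (nu i a x powr (p $ i / s)))"
      unfolding g_def using nz by (subst ln_prod) auto
    also have "\<dots> = (\<Sum>i\<in>UNIV. (p $ i / s) * ln (nu i a x))"
      using pos by (intro sum.cong refl) (simp add: ln_powr)
    also have "\<dots> = - cst nu p a x / s" unfolding cst_def
      by (simp add: sum_divide_distrib)
    finally show ?thesis .
  qed
  have gnz: "g x \<noteq> 0" for x using gp[of x] by simp
  define Z where "Z = (\<Sum>x\<in>UNIV. g x)"
  have Zp: "Z > 0" unfolding Z_def using gp by (intro sum_pos) auto
  define r where "r x = g x / Z" for x
  have rp: "\<forall>x. r x > 0" unfolding r_def using gp Zp by simp
  have rS: "r \<in> prob_simplex" unfolding prob_simplex_def r_def using gp Zp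
    by (auto simp: less_imp_le Z_def[symmetric] simp flip: sum_divide_distrib)
  have key: "fa nu p a q = s * KL q r + mval nu p a" if q: "q \<in> prob_simplex" for q
  proof -
    have sq: "(\<Sum>x\<in>UNIV. q x) = 1" using q unfolding prob_simplex_def by simp
    have "KL q r = negent q - (\<Sum>x\<in>UNIV. q x * (- cst nu p a x / s - ln Z))"
      using KL_split'[OF rp q] unfolding r_def using gp Zp by (simp add: ln_div lng gnz)
    also have "(\<Sum>x\<in>UNIV. q x * (- cst nu p a x / s - ln Z)) = - (\<Sum>x\<in>UNIV. q x * cst nu p a x) / s - ln Z"
      by (simp add: right_diff_distrib sum_subtractf sum_divide_distrib sum_negf
            flip: sum_distrib_right sq)
    finally have "KL q r = negent q + (\<Sum>x\<in>UNIV. q x * cst nu p a x) / s + ln Z" by simp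
    hence "s * KL q r = s * negent q + (\<Sum>x\<in>UNIV. q x * cst nu p a x) + s * ln Z"
      using sp by (simp add: field_simps)
    moreover have "mval nu p a = - s * ln Z"
      unfolding mval_def Z_def g_def s_def using True by simp
    ultimately show ?thesis using fa_expand[OF pos q] s_def by simp
  qed
  show ?thesis
  proof
    show "\<exists>q\<in>prob_simplex. fa nu p a q = mval nu p a"
      using key[OF rS] KL_self[OF rp] rS by auto
    show "\<forall>q\<in>prob_simplex. mval nu p a \<le> fa nu p a q"
      using key gibbs[OF _ rS rp] sp by auto
  qed
next
  case False
  obtain x0 where x0: "cst nu p a x0 = Min (range (cst nu p a))"
  proof -
    have "Min (range (cst nu p a)) \<in> range (cst nu p a)" by (rule Min_in) auto
    thus ?thesis using that by (metis imageE)
  qed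
  have mv: "mval nu p a = cst nu p a x0" using False x0 unfolding mval_def cst_def by simp
  define d where "d = (\<lambda>b. if b = x0 then 1 else 0 :: real)"
  have dS: "d \<in> prob_simplex" unfolding d_def by (rule delta_simplex)
  have nd: "negent d = 0" unfolding negent_def d_def by (intro sum.neutral) auto
  have fd: "fa nu p a d = cst nu p a x0"
    using fa_expand[OF pos dS] nd delta_sum[of x0 "cst nu p a"] unfolding d_def by simp
  show ?thesis
  proof
    show "\<exists>q\<in>prob_simplex. fa nu p a q = mval nu p a" using dS fd mv by auto
    show "\<forall>q\<in>prob_simplex. mval nu p a \<le> fa nu p a q"
    proof
      fix q :: "'c \<Rightarrow> real" assume q: "q \<in> prob_simplex"
      have "(\<Sum>i\<in>UNIV. p $ i) * negent q \<ge> 0"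
        using False negent_le0[OF q] by (simp add: mult_nonpos_nonpos)
      moreover have "(\<Sum>x\<in>UNIV. q x * cst nu p a x0) \<le> (\<Sum>x\<in>UNIV. q x * cst nu p a x)"
        using simplex_le1(2)[OF q] x0 by (intro sum_mono mult_left_mono) auto
      moreover have "(\<Sum>x\<in>UNIV. q x * cst nu p a x0) = cst nu p a x0"
        using q unfolding prob_simplex_def by (simp flip: sum_distrib_right)
      ultimately show "mval nu p a \<le> fa nu p a q" using fa_expand[OF pos q] mv by simp
    qed
  qed
qed


lemma max_range_in: fixes F :: "'a::finite \<Rightarrow> real" shows "\<exists>a0. F a0 = Max (range F)"
proof -
  have "Max (range F) \<in> range F" by (rule Min_in Max_in) auto
  thus ?thesis by (metis imageE)
qed

lemma max_range_ge: fixes F :: "'a::finite \<Rightarrow> real" shows "F a \<le> Max (range F)"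
  by (rule Max_ge) auto

lemma max_mono_range: fixes g h :: "'a::finite \<Rightarrow> real"
  assumes "\<And>a. g a \<le> h a" shows "Max (range g) \<le> Max (range h)"
proof -
  obtain a0 where "g a0 = Max (range g)" using max_range_in by blast
  thus ?thesis using assms[of a0] max_range_ge[of h a0] by linarith
qed

lemma max_diff_range: fixes g h :: "'a::finite \<Rightarrow> real"
  assumes "\<And>a. \<bar>g a - h a\<bar> \<le> c" shows "\<bar>Max (range g) - Max (range h)\<bar> \<le> c"
proof -
  obtain a0 where a0: "g a0 = Max (range g)" using max_range_in by blast
  obtain a1 where a1: "h a1 = Max (range h)" using max_range_in by blast
  have "g a0 \<le> h a0 + c" using assms[of a0] by linarith
  moreover have "h a1 \<le> g a1 + c" using assms[of a1] by linarith
  ultimately show ?thesis using a0 a1 max_range_ge[of h a0] max_range_ge[of g a1] by linarith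
qed

lemma lin_le_max: fixes F :: "'a::finite \<Rightarrow> real"
  assumes "w \<in> prob_simplex" shows "(\<Sum>a\<in>UNIV. w a * F a) \<le> Max (range F)"
proof -
  have "(\<Sum>a\<in>UNIV. w a * F a) \<le> (\<Sum>a\<in>UNIV. w a * Max (range F))"
    using simplex_le1(2)[OF assms] max_range_ge[of F] by (intro sum_mono mult_left_mono) auto
  also have "\<dots> = Max (range F)" using assms unfolding prob_simplex_def by (simp flip: sum_distrib_right)
  finally show ?thesis .
qed

lemma lin_max_attained: fixes F :: "'a::finite \<Rightarrow> real"
  shows "\<exists>w0\<in>prob_simplex. (\<Sum>a\<in>UNIV. w0 a * F a) = Max (range F)"
proof -
  obtain a0 where "F a0 = Max (range F)" using max_range_in by blast
  thus ?thesis using delta_simplex[of a0] delta_sum[of a0 F]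
    by (intro bexI[where x="\<lambda>b. if b = a0 then 1 else 0"]) simp_all
qed

lemma sup_lin: fixes F :: "'a::finite \<Rightarrow> real"
  shows "(SUP w\<in>prob_simplex. (\<Sum>a\<in>UNIV. w a * F a)) = Max (range F)"
proof -
  obtain w0 where "w0 \<in> prob_simplex" "(\<Sum>a\<in>UNIV. w0 a * F a) = Max (range F)"
    using lin_max_attained by blast
  thus ?thesis by (intro cSup_eq_maximum) (auto intro: lin_le_max rev_image_eqI)
qed

definition Q0 :: "('m::finite \<Rightarrow> 'a::finite \<Rightarrow> 'x::finite \<Rightarrow> real) \<Rightarrow> real^'m \<Rightarrow> 'a \<Rightarrow> 'x \<Rightarrow> real" where
  "Q0 nu p a = (SOME q. q \<in> prob_simplex \<and> fa nu p a q = mval nu p a)"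

lemma Q0_prop:
  assumes pos: "\<forall>i a x. nu i a x > 0"
  shows "Q0 nu p a \<in> prob_simplex" "fa nu p a (Q0 nu p a) = mval nu p a"
proof -
  have "\<exists>q. q \<in> prob_simplex \<and> fa nu p a q = mval nu p a" using mval_min[OF pos] by blast
  from someI_ex[OF this] show "Q0 nu p a \<in> prob_simplex" "fa nu p a (Q0 nu p a) = mval nu p a"
    unfolding Q0_def by auto
qed

lemma mval_le: assumes pos: "\<forall>i a x. nu i a x > 0" and "q \<in> prob_simplex"
  shows "mval nu p a \<le> fa nu p a q"
  using mval_min[OF pos] assms(2) by blast

lemma Hplus_eq:
  assumes pos: "\<forall>i a x. nu i a x > 0"
  shows "Hplus nu p = Max (range (mval nu p))"
proof -
  have "Hplus nu p = (INF Q\<in>{Q. \<forall>a. Q a \<in> prob_simplex}. Max (range (\<lambda>a. fa nu p a (Q a))))"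
    unfolding Hplus_def objective_eq sup_lin ..
  also have "\<dots> = Max (range (mval nu p))"
  proof (rule cInf_eq_minimum)
    have e: "Max (range (mval nu p)) = Max (range (\<lambda>a. fa nu p a (Q0 nu p a)))"
      using Q0_prop(2)[OF pos] by (intro arg_cong[where f=Max] image_cong) auto
    show "Max (range (mval nu p)) \<in> (\<lambda>Q. Max (range (\<lambda>a. fa nu p a (Q a)))) ` {Q. \<forall>a. Q a \<in> prob_simplex}"
      using Q0_prop(1)[OF pos] e by (intro rev_image_eqI[of "Q0 nu p"]) auto
  next
    fix y assume "y \<in> (\<lambda>Q. Max (range (\<lambda>a. fa nu p a (Q a)))) ` {Q. \<forall>a. Q a \<in> prob_simplex}"
    then obtain Q where Q: "\<forall>a. Q a \<in> prob_simplex" and y: "y = Max (range (\<lambda>a. fa nu p a (Q a)))" by blast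
    show "Max (range (mval nu p)) \<le> y" unfolding y
      by (rule max_mono_range) (use mval_le[OF pos] Q in auto)
  qed
  finally show ?thesis .
qed

lemma inf_lin:
  assumes pos: "\<forall>i a x. nu i a x > 0" and w: "w \<in> prob_simplex"
  shows "(INF Q\<in>{Q. \<forall>a. Q a \<in> prob_simplex}. objective nu p Q w) = (\<Sum>a\<in>UNIV. w a * mval nu p a)"
proof (rule cInf_eq_minimum)
  have "objective nu p (Q0 nu p) w = (\<Sum>a\<in>UNIV. w a * mval nu p a)"
    unfolding objective_eq using Q0_prop[OF pos] by simp
  thus "(\<Sum>a\<in>UNIV. w a * mval nu p a) \<in> (\<lambda>Q. objective nu p Q w) ` {Q. \<forall>a. Q a \<in> prob_simplex}"
    using Q0_prop(1)[OF pos] by (intro image_eqI[of _ _ "Q0 nu p"]) auto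
next
  fix y assume "y \<in> (\<lambda>Q. objective nu p Q w) ` {Q. \<forall>a. Q a \<in> prob_simplex}"
  then obtain Q where Q: "\<forall>a. Q a \<in> prob_simplex" and y: "y = objective nu p Q w" by blast
  show "(\<Sum>a\<in>UNIV. w a * mval nu p a) \<le> y" unfolding y objective_eq
    using simplex_le1(2)[OF w] mval_le[OF pos] Q by (intro sum_mono mult_left_mono) auto
qed

lemma Hminus_eq:
  assumes pos: "\<forall>i a x. nu i a x > 0"
  shows "Hminus nu p = Max (range (mval nu p))"
proof -
  have "Hminus nu p = (SUP w\<in>prob_simplex. (\<Sum>a\<in>UNIV. w a * mval nu p a))"
    unfolding Hminus_def by (intro SUP_cong refl inf_lin[OF pos])
  thus ?thesis by (simp add: sup_lin)
qed


lemma KL_bounds: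
  assumes q: "q \<in> prob_simplex" and P: "P \<in> prob_simplex" and e: "\<forall>x. eps \<le> P x" and ep: "0 < eps"
  shows "0 \<le> KL q P" "KL q P \<le> ln (1 / eps)"
proof -
  have Pp: "\<forall>x. P x > 0" using e ep by (meson less_le_trans)
  show "0 \<le> KL q P" by (rule gibbs[OF q P Pp])
  have "(\<Sum>x\<in>UNIV. q x * ln eps) \<le> (\<Sum>x\<in>UNIV. q x * ln (P x))"
  proof (intro sum_mono mult_left_mono)
    fix x show "ln eps \<le> ln (P x)" using e Pp ep by (subst ln_le_cancel_iff) auto
    show "0 \<le> q x" using simplex_le1(2)[OF q] .
  qed
  moreover have "(\<Sum>x\<in>UNIV. q x * ln eps) = ln eps" using q unfolding prob_simplex_def
    by (simp flip: sum_distrib_right)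
  ultimately show "KL q P \<le> ln (1 / eps)"
    using KL_split'[OF Pp q] negent_le0[OF q] ep by (simp add: ln_div)
qed

lemma fa_diff:
  assumes nuS: "\<forall>i a. nu i a \<in> prob_simplex" and e: "\<forall>i a x. eps \<le> nu i a x" and ep: "0 < eps"
    and q: "q \<in> prob_simplex"
  shows "\<bar>fa nu p a q - fa nu p' a q\<bar> \<le> ln (1 / eps) * (\<Sum>i\<in>UNIV. \<bar>p $ i - p' $ i\<bar>)"
proof -
  have "fa nu p a q - fa nu p' a q = (\<Sum>i\<in>UNIV. (p $ i - p' $ i) * KL q (nu i a))"
    unfolding fa_def by (simp add: sum_subtractf left_diff_distrib)
  also have "\<bar>\<dots>\<bar> \<le> (\<Sum>i\<in>UNIV. \<bar>(p $ i - p' $ i) * KL q (nu i a)\<bar>)" by (rule sum_abs)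
  also have "\<dots> \<le> (\<Sum>i\<in>UNIV. \<bar>p $ i - p' $ i\<bar> * ln (1 / eps))"
  proof (rule sum_mono)
    fix i
    have "0 \<le> KL q (nu i a)" "KL q (nu i a) \<le> ln (1 / eps)"
      using KL_bounds[OF q _ _ ep, of "nu i a"] nuS e by auto
    thus "\<bar>(p $ i - p' $ i) * KL q (nu i a)\<bar> \<le> \<bar>p $ i - p' $ i\<bar> * ln (1 / eps)"
      by (simp add: abs_mult mult_left_mono)
  qed
  finally show ?thesis by (simp add: sum_distrib_left mult_ac)
qed

lemma mval_diff:
  fixes nu :: "'m::finite \<Rightarrow> 'a::finite \<Rightarrow> 'x::finite \<Rightarrow> real" and p p' :: "real^'m"
  assumes nuS: "\<forall>i a. nu i a \<in> prob_simplex" and e: "\<forall>i a x. eps \<le> nu i a x" and ep: "0 < eps"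
  shows "\<bar>mval nu p a - mval nu p' a\<bar> \<le> ln (1 / eps) * (\<Sum>i\<in>UNIV. \<bar>p $ i - p' $ i\<bar>)"
proof -
  have pos: "\<forall>i a x. nu i a x > 0" using e ep by (meson less_le_trans)
  let ?c = "ln (1 / eps) * (\<Sum>i\<in>UNIV. \<bar>p $ i - p' $ i\<bar>)"
  have c': "(\<Sum>i\<in>UNIV. \<bar>p' $ i - p $ i\<bar>) = (\<Sum>i\<in>UNIV. \<bar>p $ i - p' $ i\<bar>)"
    by (simp add: abs_minus_commute)
  have "mval nu p a \<le> fa nu p a (Q0 nu p' a)" by (rule mval_le[OF pos Q0_prop(1)[OF pos]])
  also have "\<dots> \<le> fa nu p' a (Q0 nu p' a) + ?c"
    using fa_diff[OF nuS e ep Q0_prop(1)[OF pos, of p' a], where p=p and p'=p' and a=a] by linarith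
  finally have 1: "mval nu p a \<le> mval nu p' a + ?c" using Q0_prop(2)[OF pos] by simp
  have "mval nu p' a \<le> fa nu p' a (Q0 nu p a)" by (rule mval_le[OF pos Q0_prop(1)[OF pos]])
  also have "\<dots> \<le> fa nu p a (Q0 nu p a) + ?c"
    using fa_diff[OF nuS e ep Q0_prop(1)[OF pos, of p a], where p=p' and p'=p and a=a] c' by (simp only:)
  finally have 2: "mval nu p' a \<le> mval nu p a + ?c" using Q0_prop(2)[OF pos] by simp
  from 1 2 show ?thesis by linarith
qed

lemma l1_le: fixes d :: "real^'m::finite"
  shows "(\<Sum>i\<in>UNIV. \<bar>d $ i\<bar>) \<le> sqrt (real CARD('m)) * norm d"
proof -
  have "(\<Sum>i\<in>UNIV. \<bar>d $ i\<bar> * \<bar>1::real\<bar>) \<le> L2_set (\<lambda>i. d $ i) UNIV * L2_set (\<lambda>i. 1::real) (UNIV::'m set)"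
    using L2_set_mult_ineq[where f="\<lambda>i. d $ i" and g="\<lambda>i. 1::real" and A=UNIV] by simp
  moreover have "L2_set (\<lambda>i. d $ i) UNIV = norm d" unfolding norm_vec_def L2_set_def by simp
  moreover have "L2_set (\<lambda>i. 1::real) (UNIV::'m set) = sqrt (real CARD('m))" by (simp add: L2_set_constant)
  ultimately show ?thesis by (simp add: mult_ac)
qed

lemma fa_shift:
  "fa nu (p + (\<chi> j. if j = i then t else 0)) a q = fa nu p a q + t * KL q (nu i a)"
proof -
  have "fa nu (p + (\<chi> j. if j = i then t else 0)) a q
     = (\<Sum>j\<in>UNIV. p $ j * KL q (nu j a) + (if j = i then 1 else 0) * (t * KL q (nu j a)))"
    unfolding fa_def by (intro sum.cong) (auto simp: distrib_right)
  also have "\<dots> = fa nu p a q + t * KL q (nu i a)"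
    unfolding fa_def sum.distrib delta_sum ..
  finally show ?thesis .
qed

theorem mainTheorem4:
  fixes nu :: "'m::finite \<Rightarrow> 'a::finite \<Rightarrow> 'x::finite \<Rightarrow> real" and eps :: real
  assumes "CARD('m) \<ge> 2"
    and "0 < eps" and "eps < 1"
    and "\<forall>i a. nu i a \<in> prob_simplex"
    and "\<forall>i a x. eps \<le> nu i a x"
  shows "(\<forall>p::real^'m.
            (\<forall>Q. (\<forall>a. Q a \<in> prob_simplex) \<longrightarrow>
               (\<exists>w0\<in>prob_simplex. \<forall>w\<in>prob_simplex. objective nu p Q w \<le> objective nu p Q w0)) \<and>
            (\<exists>Q0. (\<forall>a. Q0 a \<in> prob_simplex) \<and> (\<forall>Q. (\<forall>a. Q a \<in> prob_simplex) \<longrightarrow>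
               (SUP w\<in>prob_simplex. objective nu p Q0 w) \<le> (SUP w\<in>prob_simplex. objective nu p Q w))) \<and>
            (\<forall>w\<in>prob_simplex. \<exists>Q0. (\<forall>a. Q0 a \<in> prob_simplex) \<and>
               (\<forall>Q. (\<forall>a. Q a \<in> prob_simplex) \<longrightarrow> objective nu p Q0 w \<le> objective nu p Q w)) \<and>
            (\<exists>w0\<in>prob_simplex. \<forall>w\<in>prob_simplex.
               (INF Q\<in>{Q. \<forall>a. Q a \<in> prob_simplex}. objective nu p Q w) \<le>
               (INF Q\<in>{Q. \<forall>a. Q a \<in> prob_simplex}. objective nu p Q w0)) \<and>
            Hplus nu p = Hminus nu p \<and>
            Hplus nu p =
              (if (\<Sum>i\<in>UNIV. p $ i) > 0
               then Max (range (\<lambda>a. - (\<Sum>i\<in>UNIV. p $ i) *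
                      ln (\<Sum>x\<in>UNIV. \<Prod>i\<in>UNIV. nu i a x powr (p $ i / (\<Sum>k\<in>UNIV. p $ k)))))
               else Max (range (\<lambda>a. Min (range (\<lambda>x. - (\<Sum>i\<in>UNIV. p $ i * ln (nu i a x))))))))
       \<and> (\<forall>p q::real^'m. \<bar>Hplus nu p - Hplus nu q\<bar> \<le> sqrt (real CARD('m)) * ln (1 / eps) * norm (p - q))
       \<and> (\<forall>(p::real^'m) i t. t \<ge> 0 \<longrightarrow> Hplus nu p \<le> Hplus nu (p + (\<chi> j. if j = i then t else 0)))"
proof -
  have pos: "\<forall>i a x. nu i a x > 0" using assms(2,5) by (meson less_le_trans)
  have Hp: "Hplus nu p = Max (range (mval nu p))" for p using Hplus_eq[OF pos] .
  have part1: "(\<forall>Q. (\<forall>a. Q a \<in> prob_simplex) \<longrightarrow>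
               (\<exists>w0\<in>prob_simplex. \<forall>w\<in>prob_simplex. objective nu p Q w \<le> objective nu p Q w0)) \<and>
            (\<exists>Q0. (\<forall>a. Q0 a \<in> prob_simplex) \<and> (\<forall>Q. (\<forall>a. Q a \<in> prob_simplex) \<longrightarrow>
               (SUP w\<in>prob_simplex. objective nu p Q0 w) \<le> (SUP w\<in>prob_simplex. objective nu p Q w))) \<and>
            (\<forall>w\<in>prob_simplex. \<exists>Q0. (\<forall>a. Q0 a \<in> prob_simplex) \<and>
               (\<forall>Q. (\<forall>a. Q a \<in> prob_simplex) \<longrightarrow> objective nu p Q0 w \<le> objective nu p Q w)) \<and>
            (\<exists>w0\<in>prob_simplex. \<forall>w\<in>prob_simplex.
               (INF Q\<in>{Q. \<forall>a. Q a \<in> prob_simplex}. objective nu p Q w) \<le>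
               (INF Q\<in>{Q. \<forall>a. Q a \<in> prob_simplex}. objective nu p Q w0)) \<and>
            Hplus nu p = Hminus nu p \<and>
            Hplus nu p =
              (if (\<Sum>i\<in>UNIV. p $ i) > 0
               then Max (range (\<lambda>a. - (\<Sum>i\<in>UNIV. p $ i) *
                      ln (\<Sum>x\<in>UNIV. \<Prod>i\<in>UNIV. nu i a x powr (p $ i / (\<Sum>k\<in>UNIV. p $ k)))))
               else Max (range (\<lambda>a. Min (range (\<lambda>x. - (\<Sum>i\<in>UNIV. p $ i * ln (nu i a x)))))))"
    for p :: "real^'m"
  proof (intro conjI)
    show "\<forall>Q. (\<forall>a. Q a \<in> prob_simplex) \<longrightarrow>
               (\<exists>w0\<in>prob_simplex. \<forall>w\<in>prob_simplex. objective nu p Q w \<le> objective nu p Q w0)"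
    proof (intro allI impI)
      fix Q :: "'a \<Rightarrow> 'x \<Rightarrow> real"
      obtain w0 where "w0 \<in> prob_simplex" "(\<Sum>a\<in>UNIV. w0 a * fa nu p a (Q a)) = Max (range (\<lambda>a. fa nu p a (Q a)))"
        using lin_max_attained[of "\<lambda>a. fa nu p a (Q a)"] by blast
      thus "\<exists>w0\<in>prob_simplex. \<forall>w\<in>prob_simplex. objective nu p Q w \<le> objective nu p Q w0"
        unfolding objective_eq using lin_le_max[of _ "\<lambda>a. fa nu p a (Q a)"] by (intro bexI[of _ w0]) auto
    qed
    show "\<exists>Q0. (\<forall>a. Q0 a \<in> prob_simplex) \<and> (\<forall>Q. (\<forall>a. Q a \<in> prob_simplex) \<longrightarrow>
               (SUP w\<in>prob_simplex. objective nu p Q0 w) \<le> (SUP w\<in>prob_simplex. objective nu p Q w))"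
    proof (intro exI[of _ "Q0 nu p"] conjI allI impI)
      show "Q0 nu p a \<in> prob_simplex" for a using Q0_prop(1)[OF pos] by blast
      fix Q :: "'a \<Rightarrow> 'x \<Rightarrow> real" assume Q: "\<forall>a. Q a \<in> prob_simplex"
      show "(SUP w\<in>prob_simplex. objective nu p (Q0 nu p) w) \<le> (SUP w\<in>prob_simplex. objective nu p Q w)"
        unfolding objective_eq sup_lin
        by (rule max_mono_range) (use Q0_prop(2)[OF pos] mval_le[OF pos] Q in auto)
    qed
    show "\<forall>w\<in>prob_simplex. \<exists>Q0. (\<forall>a. Q0 a \<in> prob_simplex) \<and>
               (\<forall>Q. (\<forall>a. Q a \<in> prob_simplex) \<longrightarrow> objective nu p Q0 w \<le> objective nu p Q w)"
    proof (intro ballI exI[of _ "Q0 nu p"] conjI allI impI)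
      show "Q0 nu p a \<in> prob_simplex" for a using Q0_prop(1)[OF pos] by blast
      fix w :: "'a \<Rightarrow> real" and Q :: "'a \<Rightarrow> 'x \<Rightarrow> real" assume w: "w \<in> prob_simplex" and Q: "\<forall>a. Q a \<in> prob_simplex"
      show "objective nu p (Q0 nu p) w \<le> objective nu p Q w"
        unfolding objective_eq using simplex_le1(2)[OF w] Q0_prop(2)[OF pos] mval_le[OF pos] Q
        by (intro sum_mono mult_left_mono) auto
    qed
    show "\<exists>w0\<in>prob_simplex. \<forall>w\<in>prob_simplex.
               (INF Q\<in>{Q. \<forall>a. Q a \<in> prob_simplex}. objective nu p Q w) \<le>
               (INF Q\<in>{Q. \<forall>a. Q a \<in> prob_simplex}. objective nu p Q w0)"
    proof -
      obtain w0 where w0: "w0 \<in> prob_simplex" "(\<Sum>a\<in>UNIV. w0 a * mval nu p a) = Max (range (mval nu p))"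
        using lin_max_attained[of "mval nu p"] by blast
      show ?thesis
        using w0 inf_lin[OF pos] lin_le_max by (intro bexI[of _ w0]) auto
    qed
    show "Hplus nu p = Hminus nu p" using Hp Hminus_eq[OF pos] by simp
    show "Hplus nu p =
              (if (\<Sum>i\<in>UNIV. p $ i) > 0
               then Max (range (\<lambda>a. - (\<Sum>i\<in>UNIV. p $ i) *
                      ln (\<Sum>x\<in>UNIV. \<Prod>i\<in>UNIV. nu i a x powr (p $ i / (\<Sum>k\<in>UNIV. p $ k)))))
               else Max (range (\<lambda>a. Min (range (\<lambda>x. - (\<Sum>i\<in>UNIV. p $ i * ln (nu i a x)))))))"
      unfolding Hp mval_def by simp
  qed
  have part2: "\<bar>Hplus nu p - Hplus nu q\<bar> \<le> sqrt (real CARD('m)) * ln (1 / eps) * norm (p - q)"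
    for p q :: "real^'m"
  proof -
    have "\<bar>Hplus nu p - Hplus nu q\<bar> \<le> ln (1 / eps) * (\<Sum>i\<in>UNIV. \<bar>p $ i - q $ i\<bar>)"
      unfolding Hp by (rule max_diff_range) (rule mval_diff[OF assms(4) assms(5) assms(2)])
    also have "\<dots> \<le> ln (1 / eps) * (sqrt (real CARD('m)) * norm (p - q))"
      using l1_le[of "p - q"] assms(2,3) by (intro mult_left_mono) auto
    finally show ?thesis by (simp add: mult_ac)
  qed
  have part3: "Hplus nu p \<le> Hplus nu (p + (\<chi> j. if j = i then t else 0))"
    if t: "t \<ge> 0" for p :: "real^'m" and i t
    unfolding Hp
  proof (rule max_mono_range)
    fix a
    have "mval nu p a \<le> fa nu p a (Q0 nu (p + (\<chi> j. if j = i then t else 0)) a)"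
      by (rule mval_le[OF pos Q0_prop(1)[OF pos]])
    also have "\<dots> \<le> fa nu (p + (\<chi> j. if j = i then t else 0)) a (Q0 nu (p + (\<chi> j. if j = i then t else 0)) a)"
      unfolding fa_shift using t gibbs[OF Q0_prop(1)[OF pos], of "nu i a"] assms(4) pos by simp
    also have "\<dots> = mval nu (p + (\<chi> j. if j = i then t else 0)) a" by (rule Q0_prop(2)[OF pos])
    finally show "mval nu p a \<le> mval nu (p + (\<chi> j. if j = i then t else 0)) a" .
  qed
  show ?thesis
    apply (rule conjI, rule allI, rule part1)
    apply (rule conjI, (rule allI)+, rule part2)
    apply ((rule allI)+, rule impI, erule part3)
    done
qed

end
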